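(* Assume the standing assumptions below. Let $\{u^{(k)}=w_{i_k}\cdots w_{j_k}\}_{k\ge0}$ be a $\Delta$-sequence whose signed left stretches $\sigma^{(k)}=\sigma$ and signed right stretches $\rho^{(k)}=\rho$ are constant for all $k\ge1$. Let $A$ be the incidence matrix of $h$ and $\mathbf 1$ the all-ones row vector of length $|\Sigma|$. Then there exist integral column vectors $U,V,X,Y$ of length $|\Sigma|$, with $U,V$ nonnegative and nonzero, and a constant $c$, such that for all $k\ge0$: $i_k=\mathbf 1\big(A^kV+(\sum_{n=0}^{k-1}A^n)X\big)$; $j_k=i_k+\mathbf 1\big(A^kU+(\sum_{n=0}^{k-1}A^n)Y\big)-1$; and $j_k/i_k<c$.
   Context: Standing assumptions: $\Sigma=\{0,\dots,n-1\}$ is a finite alphabet; $h:\Sigma^*\to\Sigma^*$ is a nonerasing morphism prolongable on $w_0$ and $\mathbf w=w_0w_1w_2\cdots=h^\omega(w_0)$ is aperiodic; $h$ satisfies $\mathrm{alph}(h^n(a))=\mathrm{alph}(h(a))$ for all $a$, $n\ge1$ ($\mathrm{alph}(w)$ = set of letters of $w$); $M=\max\{|h(a)|:a\in\Sigma\}$; $\Delta\subsetneq\Sigma$ nonempty, $\overline\Delta=\Sigma\setminus\Delta$. Positions are indexed from $0$. The incidence matrix $A=(a_{i,j})$ of $h$ has $a_{i,j}=|h(j)|_i$ (number of occurrences of letter $i$ in $h(j)$). A factor $w_i\cdots w_j$ is a $\Delta$-block if all its letters are in $\Delta$; maximal if also $w_{j+1}\in\overline\Delta$ and ($i=0$ or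 $w_{i-1}\in\overline\Delta$). Occurrences are factors with position intervals; $u'\prec u$ means interval containment. Since $\mathbf w=h(w_0)h(w_1)\cdots$, $h(w_p\cdots w_q)$ denotes the occurrence occupying the positions of blocks $h(w_p),\dots,h(w_q)$. A $\Delta$-sequence is a sequence $u^{(k)}=w_{i_k}\cdots w_{j_k}$ ($k\ge0$) of maximal $\Delta$-blocks with $i_k>M$, $|u^{(k)}|>M^2$, and $h(w_{i_k+M}\cdots w_{j_k-M})\prec u^{(k+1)}\prec h(w_{i_k-M+1}\cdots w_{j_k+M-1})$. Stretches: let $h(w_{i_k})$ occupy positions $r_{k+1},\dots,s_{k+1}$ and $h(w_{j_k})$ occupy $m_{k+1},\dots,n_{k+1}$. Left stretch $\sigma^{(k+1)}$: positive word $w_{i_{k+1}}\cdots w_{r_{k+1}-1}$ if $i_{k+1}<r_{k+1}$; negative word $w_{r_{k+1}}\cdots w_{i_{k+1}-1}$ if $i_{k+1}>r_{k+1}$; $\epsilon$ if equal. Right stretch $\rho^{(k+1)}$: positive word $w_{n_{k+1}+1}\cdots w_{j_{k+1}}$ if $j_{k+1}>n_{k+1}$; negative word $w_{j_{k+1}+1}\cdots w_{n_{k+1}}$ if $j_{k+1}<n_{k+1}$; $\epsilon$ if equal. Stretches are pairs (word, sign). *)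

theory Defs
  imports Main "Jordan_Normal_Form.Matrix"
begin

text \<open>Alphabet: the letters 0..n-1 (natural numbers); words are lists; the infinite
word w is a function nat => nat (positions from 0); the morphism h is given by
the images of the letters.\<close>

definition morph :: "(nat \<Rightarrow> nat list) \<Rightarrow> nat list \<Rightarrow> nat list" where
  "morph h u = concat (map h u)"

definition aperiodic :: "(nat \<Rightarrow> nat) \<Rightarrow> bool" where
  "aperiodic w \<longleftrightarrow> \<not> (\<exists>p>0. \<exists>N. \<forall>i\<ge>N. w (i + p) = w i)"

definition standing :: "nat \<Rightarrow> (nat \<Rightarrow> nat list) \<Rightarrow> (nat \<Rightarrow> nat) \<Rightarrow> bool" where
  "standing n h w \<longleftrightarrow>
     n \<ge> 1 \<and>
     (\<forall>a<n. h a \<noteq> [] \<and> set (h a) \<subseteq> {..<n}) \<and>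
     w 0 < n \<and>
     (\<exists>z. z \<noteq> [] \<and> h (w 0) = w 0 # z) \<and>
     (\<forall>k p. p < length ((morph h ^^ k) [w 0]) \<longrightarrow> w p = ((morph h ^^ k) [w 0]) ! p) \<and>
     aperiodic w \<and>
     (\<forall>a<n. \<forall>m\<ge>1. set ((morph h ^^ m) [a]) = set (h a))"

definition maxlen :: "nat \<Rightarrow> (nat \<Rightarrow> nat list) \<Rightarrow> nat" where
  "maxlen n h = Max ((\<lambda>a. length (h a)) ` {..<n})"

text \<open>Since w = h(w_0) h(w_1) ..., the block h(w_p) starts at position blk_start h w p.\<close>
definition blk_start :: "(nat \<Rightarrow> nat list) \<Rightarrow> (nat \<Rightarrow> nat) \<Rightarrow> nat \<Rightarrow> nat" where
  "blk_start h w p = (\<Sum>q<p. length (h (w q)))"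

definition maximal_block :: "nat set \<Rightarrow> (nat \<Rightarrow> nat) \<Rightarrow> nat \<Rightarrow> nat \<Rightarrow> bool" where
  "maximal_block D w i j \<longleftrightarrow> i \<le> j \<and> (\<forall>p. i \<le> p \<and> p \<le> j \<longrightarrow> w p \<in> D) \<and>
     w (Suc j) \<notin> D \<and> (i = 0 \<or> w (i - 1) \<notin> D)"

text \<open>Delta-sequence: u^(k) = w_{i k} ... w_{j k}.  The occurrence
h(w_p ... w_q) occupies positions blk_start p .. blk_start (q+1) - 1; containment of
occurrences is containment of position intervals.\<close>
definition delta_seq :: "nat \<Rightarrow> (nat \<Rightarrow> nat list) \<Rightarrow> (nat \<Rightarrow> nat) \<Rightarrow> nat set
     \<Rightarrow> (nat \<Rightarrow> nat) \<Rightarrow> (nat \<Rightarrow> nat) \<Rightarrow> bool" where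
  "delta_seq n h w D i j \<longleftrightarrow>
    (let M = maxlen n h in
     \<forall>k. maximal_block D w (i k) (j k) \<and> i k > M \<and> j k + 1 - i k > M ^ 2 \<and>
       blk_start h w (i k - M + 1) \<le> i (Suc k) \<and>
       i (Suc k) \<le> blk_start h w (i k + M) \<and>
       blk_start h w (j k - M + 1) \<le> j (Suc k) + 1 \<and>
       j (Suc k) + 1 \<le> blk_start h w (j k + M))"

text \<open>Signed stretches: pairs (word, sign) with sign 1 (positive), -1 (negative),
and ([],0) for the empty stretch. lstretch h w i k is sigma^(k+1), determined by
u^(k) and u^(k+1); similarly rstretch h w j k is rho^(k+1).\<close>
definition lstretch :: "(nat \<Rightarrow> nat list) \<Rightarrow> (nat \<Rightarrow> nat) \<Rightarrow> (nat \<Rightarrow> nat) \<Rightarrow> nat \<Rightarrow> nat list \<times> int" where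
  "lstretch h w i k =
    (let r = blk_start h w (i k); i' = i (Suc k) in
     if i' < r then (map w [i'..<r], 1)
     else if r < i' then (map w [r..<i'], -1)
     else ([], 0))"

definition rstretch :: "(nat \<Rightarrow> nat list) \<Rightarrow> (nat \<Rightarrow> nat) \<Rightarrow> (nat \<Rightarrow> nat) \<Rightarrow> nat \<Rightarrow> nat list \<times> int" where
  "rstretch h w j k =
    (let nn = blk_start h w (Suc (j k)) - 1; j' = j (Suc k) in
     if nn < j' then (map w [Suc nn..<Suc j'], 1)
     else if j' < nn then (map w [Suc j'..<Suc nn], -1)
     else ([], 0))"

definition incidence :: "nat \<Rightarrow> (nat \<Rightarrow> nat list) \<Rightarrow> int mat" where
  "incidence n h = mat n n (\<lambda>(a, b). int (count_list (h b) a))"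

fun pow_sum :: "nat \<Rightarrow> int mat \<Rightarrow> nat \<Rightarrow> int mat" where
  "pow_sum d A 0 = 0\<^sub>m d d"
| "pow_sum d A (Suc k) = pow_sum d A k + A ^\<^sub>m k"

definition ones_mult :: "nat \<Rightarrow> int vec \<Rightarrow> int" where
  "ones_mult d v = vec d (\<lambda>_. 1) \<bullet> v"

end

theory Submission
  imports Defs
begin


definition parikh :: "nat \<Rightarrow> nat list \<Rightarrow> int vec" where
  "parikh n u = vec n (\<lambda>a. int (count_list u a))"

lemma parikh_carrier[simp]: "parikh n u \<in> carrier_vec n"
  by (simp add: parikh_def)

lemma parikh_dim[simp]: "dim_vec (parikh n u) = n"
  by (simp add: parikh_def)

lemma zero_mat_mult_vec[simp]: "v \<in> carrier_vec nc \<Longrightarrow> 0\<^sub>m nr nc *\<^sub>v v = 0\<^sub>v nr"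
  by (intro eq_vecI) (auto simp: scalar_prod_def)

lemma mat_mult_zero_vec[simp]: "A \<in> carrier_mat nr nc \<Longrightarrow> A *\<^sub>v 0\<^sub>v nc = 0\<^sub>v nr"
  by (intro eq_vecI) (auto simp: scalar_prod_def)

lemma parikh_index[simp]: "a < n \<Longrightarrow> parikh n u $ a = int (count_list u a)"
  by (simp add: parikh_def)

lemma incidence_dim[simp]: "dim_row (incidence n h) = n" "dim_col (incidence n h) = n"
  by (simp_all add: incidence_def)

lemma vec_rearr1: "(a :: int vec) \<in> carrier_vec d \<Longrightarrow> b \<in> carrier_vec d \<Longrightarrow> c \<in> carrier_vec d \<Longrightarrow>
  a + b + c = (a + c) + b"
  by (intro eq_vecI) auto

lemma vec_rearr2: "(a :: int vec) \<in> carrier_vec d \<Longrightarrow> b \<in> carrier_vec d \<Longrightarrow> c \<in> carrier_vec d \<Longrightarrow>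
  a + b + c = a + (b + c)"
  by (intro eq_vecI) auto

lemma incidence_carrier[simp]: "incidence n h \<in> carrier_mat n n"
  by (simp add: incidence_def)

lemma morph_append[simp]: "morph h (u @ v) = morph h u @ morph h v"
  by (simp add: morph_def)

lemma morph_Cons: "morph h (x # u) = h x @ morph h u"
  by (simp add: morph_def)

lemma morph_Nil[simp]: "morph h [] = []"
  by (simp add: morph_def)

lemma sum_count_cons:
  fixes n :: nat
  assumes "x < n"
  shows "(\<Sum>b<n. f b * int (count_list (x # u) b)) = f x + (\<Sum>b<n. f b * int (count_list u b))"
proof -
  have "(\<Sum>b<n. f b * int (count_list (x # u) b)) = (\<Sum>b<n. (if b = x then f b else 0) + f b * int (count_list u b))"
    by (rule sum.cong) (auto simp: algebra_simps)
  also have "\<dots> = f x + (\<Sum>b<n. f b * int (count_list u b))"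
  proof -
    have "(\<Sum>b<n. if b = x then f b else 0) = f x" using assms by (simp add: sum.delta)
    thus ?thesis by (simp add: sum.distrib)
  qed
  finally show ?thesis .
qed

lemma incidence_parikh:
  assumes "set u \<subseteq> {..<n}"
  shows "incidence n h *\<^sub>v parikh n u = parikh n (morph h u)"
proof (rule eq_vecI)
  fix a assume a: "a < dim_vec (parikh n (morph h u))"
  hence a: "a < n" by simp
  have "(incidence n h *\<^sub>v parikh n u) $ a = (\<Sum>b<n. int (count_list (h b) a) * int (count_list u b))"
    using a by (simp add: incidence_def scalar_prod_def row_def lessThan_atLeast0)
  also have "\<dots> = int (count_list (morph h u) a)"
    using assms
  proof (induction u)
    case Nil thus ?case by simp
  next
    case (Cons x u)
    hence "(\<Sum>b<n. int (count_list (h b) a) * int (count_list (x # u) b)) = int (count_list (h x) a) + (\<Sum>b<n. int (count_list (h b) a) * int (count_list u b))"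
      by (intro sum_count_cons) auto
    thus ?case using Cons by (simp add: morph_Cons del: count_list.simps)
  qed
  finally show "(incidence n h *\<^sub>v parikh n u) $ a = parikh n (morph h u) $ a" using a by simp
qed simp

lemma ones_parikh:
  assumes "set u \<subseteq> {..<n}"
  shows "ones_mult n (parikh n u) = int (length u)"
proof -
  have "ones_mult n (parikh n u) = (\<Sum>a<n. int (count_list u a))"
    by (simp add: ones_mult_def scalar_prod_def lessThan_atLeast0)
  also have "\<dots> = int (\<Sum>a<n. count_list u a)" by simp
  also have "(\<Sum>a<n. count_list u a) = length u" using assms by (simp add: sum_count_set)
  finally show ?thesis .
qed

lemma pow_sum_carrier[simp]: "A \<in> carrier_mat d d \<Longrightarrow> pow_sum d A k \<in> carrier_mat d d"
  by (induction k) auto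

lemma pow_mat_Suc': "A \<in> carrier_mat d d \<Longrightarrow> A ^\<^sub>m Suc k = A * A ^\<^sub>m k"
proof (induction k)
  case 0 thus ?case by simp
next
  case (Suc k)
  have "A ^\<^sub>m Suc (Suc k) = (A * A ^\<^sub>m k) * A" using Suc by simp
  also have "\<dots> = A * (A ^\<^sub>m k * A)" using Suc.prems
    by (intro assoc_mult_mat[of _ d d _ d _ d]) (auto simp del: pow_mat.simps)
  finally show ?case by simp
qed

lemma pow_sum_vec:
  assumes A: "A \<in> carrier_mat d d" and X: "X \<in> carrier_vec d"
  shows "A *\<^sub>v (pow_sum d A k *\<^sub>v X) + X = pow_sum d A k *\<^sub>v X + (A ^\<^sub>m k) *\<^sub>v X"
proof (induction k)
  case 0 show ?case using A X by auto
next
  case (Suc k)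
  have c1: "pow_sum d A k *\<^sub>v X \<in> carrier_vec d" by (rule mult_mat_vec_carrier[OF pow_sum_carrier[OF A] X])
  have c2: "(A ^\<^sub>m k) *\<^sub>v X \<in> carrier_vec d" by (rule mult_mat_vec_carrier[OF pow_carrier_mat[OF A] X])
  have "A *\<^sub>v (pow_sum d A (Suc k) *\<^sub>v X) + X = A *\<^sub>v (pow_sum d A k *\<^sub>v X + (A ^\<^sub>m k) *\<^sub>v X) + X"
    using A X by (simp add: add_mult_distrib_mat_vec[of _ d d])
  also have "\<dots> = (A *\<^sub>v (pow_sum d A k *\<^sub>v X) + X) + A *\<^sub>v ((A ^\<^sub>m k) *\<^sub>v X)"
  proof -
    have "A *\<^sub>v (pow_sum d A k *\<^sub>v X + (A ^\<^sub>m k) *\<^sub>v X) = A *\<^sub>v (pow_sum d A k *\<^sub>v X) + A *\<^sub>v ((A ^\<^sub>m k) *\<^sub>v X)"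
      using A c1 c2 by (rule mult_add_distrib_mat_vec)
    moreover have "A *\<^sub>v (pow_sum d A k *\<^sub>v X) \<in> carrier_vec d" using A c1 by (rule mult_mat_vec_carrier)
    moreover have "A *\<^sub>v ((A ^\<^sub>m k) *\<^sub>v X) \<in> carrier_vec d" using A c2 by (rule mult_mat_vec_carrier)
    ultimately show ?thesis using X by (metis vec_rearr1)
  qed
  also have "A *\<^sub>v ((A ^\<^sub>m k) *\<^sub>v X) = (A ^\<^sub>m Suc k) *\<^sub>v X"
    using assoc_mult_mat_vec[OF A pow_carrier_mat[OF A] X] by (simp add: pow_mat_Suc'[OF A] del: pow_mat.simps)
  finally show ?case using Suc A X c1 c2
    by (simp add: add_mult_distrib_mat_vec[of _ d d] del: pow_mat.simps)
qed

lemma closed_form: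
  assumes A: "A \<in> carrier_mat d d" and V: "V \<in> carrier_vec d" and X: "X \<in> carrier_vec d"
    and P0: "P 0 = V" and PS: "\<And>k. P (Suc k) = A *\<^sub>v P k + X"
  shows "P k = (A ^\<^sub>m k) *\<^sub>v V + pow_sum d A k *\<^sub>v X"
proof (induction k)
  case 0 show ?case using A V X P0 by auto
next
  case (Suc k)
  have c1: "pow_sum d A k *\<^sub>v X \<in> carrier_vec d" by (rule mult_mat_vec_carrier[OF pow_sum_carrier[OF A] X])
  have c2: "(A ^\<^sub>m k) *\<^sub>v V \<in> carrier_vec d" by (rule mult_mat_vec_carrier[OF pow_carrier_mat[OF A] V])
  have "P (Suc k) = A *\<^sub>v ((A ^\<^sub>m k) *\<^sub>v V + pow_sum d A k *\<^sub>v X) + X" using Suc PS by simp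
  also have "\<dots> = A *\<^sub>v ((A ^\<^sub>m k) *\<^sub>v V) + (A *\<^sub>v (pow_sum d A k *\<^sub>v X) + X)"
    using A c1 c2 X by (simp add: mult_add_distrib_mat_vec[of _ d d] vec_rearr2[of _ d])
  also have "A *\<^sub>v ((A ^\<^sub>m k) *\<^sub>v V) = (A ^\<^sub>m Suc k) *\<^sub>v V"
    using assoc_mult_mat_vec[OF A pow_carrier_mat[OF A] V] by (simp add: pow_mat_Suc'[OF A] del: pow_mat.simps)
  also have "A *\<^sub>v (pow_sum d A k *\<^sub>v X) + X = pow_sum d A (Suc k) *\<^sub>v X"
    using pow_sum_vec[OF A X, of k] A X by (simp add: add_mult_distrib_mat_vec[of _ d d])
  finally show ?case .
qed



lemma morph_pow_append: "(morph h ^^ m) (u @ v) = (morph h ^^ m) u @ (morph h ^^ m) v"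
  by (induction m) auto

lemma morph_pow_set: "set ((morph h ^^ m) u) = (\<Union>b\<in>set u. set ((morph h ^^ m) [b]))"
proof (induction u)
  case Nil
  have "(morph h ^^ m) [] = []" by (induction m) auto
  thus ?case by simp
next
  case (Cons b u)
  have "(morph h ^^ m) (b # u) = (morph h ^^ m) [b] @ (morph h ^^ m) u"
    using morph_pow_append[where h=h and m=m and u="[b]" and v=u] by simp
  thus ?case using Cons by simp
qed

lemma W_split: "a \<le> b \<Longrightarrow> map w [0..<b] = map w [0..<a] @ map w [a..<b]"
  by (metis map_append le_add_diff_inverse upt_add_eq_append zero_le)

locale std =
  fixes n :: nat and h :: "nat \<Rightarrow> nat list" and w :: "nat \<Rightarrow> nat"
  assumes st: "standing n h w"
begin

definition T where "T k = (morph h ^^ k) [w 0]"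
definition W where "W L = map w [0..<L]"
definition M where "M = maxlen n h"

lemma n1: "n \<ge> 1" using st by (simp add: standing_def)
lemma hne: "a < n \<Longrightarrow> h a \<noteq> []" using st by (simp add: standing_def)
lemma hset: "a < n \<Longrightarrow> set (h a) \<subseteq> {..<n}" using st by (simp add: standing_def)
lemma w0n: "w 0 < n" using st by (simp add: standing_def)
lemma wT: "p < length (T k) \<Longrightarrow> w p = T k ! p" using st by (simp add: standing_def T_def)
lemma alph: "a < n \<Longrightarrow> m \<ge> 1 \<Longrightarrow> set ((morph h ^^ m) [a]) = set (h a)"
  using st by (simp add: standing_def)

definition z where "z = (SOME z. z \<noteq> [] \<and> h (w 0) = w 0 # z)"
lemma z: "z \<noteq> []" "h (w 0) = w 0 # z"
proof -
  have "\<exists>z. z \<noteq> [] \<and> h (w 0) = w 0 # z" using st by (simp add: standing_def)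
  hence "z \<noteq> [] \<and> h (w 0) = w 0 # z" unfolding z_def by (rule someI_ex)
  thus "z \<noteq> []" "h (w 0) = w 0 # z" by auto
qed

lemma set_morph: "set u \<subseteq> {..<n} \<Longrightarrow> set (morph h u) \<subseteq> {..<n}"
  using hset by (auto simp: morph_def)

lemma set_T: "set (T k) \<subseteq> {..<n}"
  by (induction k) (auto simp: T_def w0n intro!: set_morph[simplified])

lemma len_morph_ge: "set u \<subseteq> {..<n} \<Longrightarrow> length u \<le> length (morph h u)"
proof (induction u)
  case (Cons x u)
  hence "length (h x) \<ge> 1" using hne[of x] by (cases "h x") auto
  thus ?case using Cons by (simp add: morph_Cons)
qed simp

lemma h_le_M: "a < n \<Longrightarrow> length (h a) \<le> M"
  unfolding M_def maxlen_def by (rule Max_ge) auto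

lemma M1: "M \<ge> 1"
proof -
  have "length (h 0) \<ge> 1" using hne[of 0] n1 by (cases "h 0") auto
  thus ?thesis using h_le_M[of 0] n1 by simp
qed

lemma len_morph_le: "set u \<subseteq> {..<n} \<Longrightarrow> length (morph h u) \<le> M * length u"
proof (induction u)
  case (Cons x u)
  thus ?case using h_le_M[of x] by (simp add: morph_Cons)
qed simp

lemma T_Suc: "T (Suc k) = morph h (T k)" by (simp add: T_def)

lemma T_Cons: "\<exists>t. T k = w 0 # t"
proof (induction k)
  case 0 thus ?case by (simp add: T_def)
next
  case (Suc k)
  then obtain t where "T k = w 0 # t" by blast
  thus ?case using z by (simp add: T_Suc morph_Cons)
qed

lemma len_T_Suc: "length (T k) < length (T (Suc k))"
proof -
  obtain t where t: "T k = w 0 # t" using T_Cons by blast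
  have "set t \<subseteq> {..<n}" using set_T[of k] t by auto
  hence "length t \<le> length (morph h t)" by (rule len_morph_ge)
  moreover have "length z \<ge> 1" using z(1) by (cases z) auto
  ultimately show ?thesis using t z by (simp add: T_Suc morph_Cons)
qed

lemma len_T: "Suc k \<le> length (T k)"
proof (induction k)
  case 0 thus ?case by (simp add: T_def)
next
  case (Suc k) thus ?case using len_T_Suc[of k] by simp
qed

lemma W_T: "W (length (T k)) = T k"
  by (rule nth_equalityI) (auto simp: W_def wT)

lemma W_take: "L \<le> length (T k) \<Longrightarrow> W L = take L (T k)"
proof -
  assume L: "L \<le> length (T k)"
  have "W L = take L (W (length (T k)))" using L by (simp add: W_def take_map)
  thus ?thesis by (simp add: W_T)
qed

lemma w_lt: "w p < n"
proof -
  have "p < length (T p)" using len_T[of p] by simp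
  hence "w p = T p ! p" "T p ! p \<in> set (T p)" using wT by auto
  thus ?thesis using set_T[of p] by auto
qed

lemma set_W: "set (W L) \<subseteq> {..<n}" using w_lt by (auto simp: W_def)
lemma set_mapw: "set (map w xs) \<subseteq> {..<n}" using w_lt by auto

lemma len_W[simp]: "length (W L) = L" by (simp add: W_def)

lemma len_morph_W: "length (morph h (W p)) = blk_start h w p"
  by (induction p) (auto simp: W_def blk_start_def morph_def)

lemma fixpt: "W (blk_start h w p) = morph h (W p)"
proof -
  have pl: "p \<le> length (T p)" using len_T[of p] by simp
  have Wp: "W p = take p (T p)" using W_take[OF pl] .
  have "T p = W p @ drop p (T p)" using Wp by simp
  hence TS: "T (Suc p) = morph h (W p) @ morph h (drop p (T p))"
    by (metis T_Suc morph_append)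
  have "blk_start h w p \<le> length (T (Suc p))" using TS len_morph_W[of p] by simp
  hence "W (blk_start h w p) = take (blk_start h w p) (T (Suc p))" by (rule W_take)
  thus ?thesis using TS len_morph_W[of p] by simp
qed

lemma T_Suc2: "T (Suc m) = T m @ (morph h ^^ m) z"
proof -
  have "T (Suc m) = (morph h ^^ m) (morph h [w 0])" by (simp add: T_def funpow_swap1)
  also have "morph h [w 0] = [w 0] @ z" using z by (simp add: morph_Cons)
  finally show ?thesis using morph_pow_append[where h=h and m=m and u="[w 0]" and v=z] by (simp add: T_def)
qed

lemma pos: "q < length ((morph h ^^ m) z) \<Longrightarrow> w (length (T m) + q) = ((morph h ^^ m) z) ! q"
proof -
  assume q: "q < length ((morph h ^^ m) z)"
  have "length (T m) + q < length (T (Suc m))" using q by (simp add: T_Suc2)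
  hence "w (length (T m) + q) = T (Suc m) ! (length (T m) + q)" by (rule wT)
  thus ?thesis by (simp add: T_Suc2 nth_append)
qed

definition Z1 where "Z1 = (\<Union>b\<in>set z. set (h b))"

lemma set_z: "set z \<subseteq> {..<n}" using hset[OF w0n] z by auto

lemma set_Zm: assumes m: "m \<ge> 1" shows "set ((morph h ^^ m) z) = Z1"
proof -
  have "set((morph h ^^ m) z) = (\<Union>b\<in>set z. set((morph h ^^ m) [b]))" by (rule morph_pow_set)
  also have "\<dots> = Z1" unfolding Z1_def using set_z alph[OF _ m] by (intro SUP_cong) auto
  finally show ?thesis .
qed

lemma growth: "length (T (Suc (Suc m))) \<le> M^2 * length (T m)"
proof -
  have "length (T (Suc (Suc m))) \<le> M * length (T (Suc m))"
    unfolding T_Suc[of "Suc m"] by (rule len_morph_le[OF set_T])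
  also have "length (T (Suc m)) \<le> M * length (T m)"
    unfolding T_Suc[of m] by (rule len_morph_le[OF set_T])
  finally show ?thesis by (simp add: power2_eq_square mult.assoc)
qed

lemma locate: "1 \<le> x \<Longrightarrow> \<exists>m. length (T m) \<le> x \<and> x < length (T (Suc m))"
proof -
  assume x: "1 \<le> x"
  define m0 where "m0 = (LEAST m. x < length (T m))"
  have ex: "x < length (T x)" using len_T[of x] by simp
  have m0: "x < length (T m0)" unfolding m0_def by (rule LeastI[of "\<lambda>m. x < length (T m)" x, OF ex])
  have "m0 \<noteq> 0" using m0 x by (cases m0) (auto simp: T_def)
  then obtain m' where m': "m0 = Suc m'" by (cases m0) auto
  have "\<not> x < length (T m')" using m' unfolding m0_def
    by (metis lessI not_less_Least)
  thus ?thesis using m0 m' by (intro exI[of _ m']) auto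
qed

lemma letters_after: "length (T 1) \<le> p \<Longrightarrow> w p \<in> Z1"
proof -
  assume p: "length (T 1) \<le> p"
  have "1 \<le> p" using p len_T[of 1] by simp
  then obtain m where m: "length (T m) \<le> p" "p < length (T (Suc m))" using locate by blast
  have "m \<noteq> 0" using m p by (cases m) auto
  define q where "q = p - length (T m)"
  have q: "q < length ((morph h ^^ m) z)" using m by (simp add: q_def T_Suc2)
  have "w p = ((morph h ^^ m) z) ! q" using pos[OF q] m by (simp add: q_def)
  hence "w p \<in> set ((morph h ^^ m) z)" using q by simp
  thus ?thesis using set_Zm \<open>m \<noteq> 0\<close> by auto
qed

lemma ratio:
  assumes e: "e \<in> Z1" "e \<notin> D" and i: "1 \<le> i" and blk: "\<forall>p. i \<le> p \<and> p \<le> j \<longrightarrow> w p \<in> D"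
  shows "j < M^2 * i"
proof -
  obtain m where m: "length (T m) \<le> i" "i < length (T (Suc m))" using locate[OF i] by blast
  have "e \<in> set ((morph h ^^ Suc m) z)" using set_Zm[of "Suc m"] e by simp
  then obtain q where q: "q < length ((morph h ^^ Suc m) z)" "((morph h ^^ Suc m) z) ! q = e"
    by (metis in_set_conv_nth)
  define p where "p = length (T (Suc m)) + q"
  have wp: "w p = e" using pos[OF q(1)] q(2) by (simp add: p_def)
  have "p < length (T (Suc (Suc m)))" using q(1) by (simp add: p_def T_Suc2[of "Suc m"])
  also have "\<dots> \<le> M^2 * length (T m)" by (rule growth)
  also have "\<dots> \<le> M^2 * i" using m by simp
  finally have pM: "p < M^2 * i" .
  have "\<not> p \<le> j" using blk wp e m by (auto simp: p_def)
  thus ?thesis using pM by simp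
qed

end


theorem lemma15:
  fixes n :: nat and h :: "nat \<Rightarrow> nat list" and w :: "nat \<Rightarrow> nat"
    and D :: "nat set" and i j :: "nat \<Rightarrow> nat"
    and \<sigma> \<rho> :: "nat list \<times> int"
  assumes "standing n h w"
    and "D \<subseteq> {..<n}" and "D \<noteq> {}" and "D \<noteq> {..<n}"
    and "delta_seq n h w D i j"
    and "\<forall>k. lstretch h w i k = \<sigma>"
    and "\<forall>k. rstretch h w j k = \<rho>"
  shows "\<exists>U V X Y :: int vec. \<exists>c :: real.
     U \<in> carrier_vec n \<and> V \<in> carrier_vec n \<and> X \<in> carrier_vec n \<and> Y \<in> carrier_vec n \<and>
     (\<forall>a<n. U $ a \<ge> 0) \<and> U \<noteq> 0\<^sub>v n \<and> (\<forall>a<n. V $ a \<ge> 0) \<and> V \<noteq> 0\<^sub>v n \<and>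
     (\<forall>k. int (i k) = ones_mult n ((incidence n h ^\<^sub>m k) *\<^sub>v V + pow_sum n (incidence n h) k *\<^sub>v X) \<and>
          int (j k) = int (i k) + ones_mult n ((incidence n h ^\<^sub>m k) *\<^sub>v U + pow_sum n (incidence n h) k *\<^sub>v Y) - 1 \<and>
          real (j k) / real (i k) < c)"
proof -
  interpret std n h w using assms(1) by unfold_locales
  define A where "A = incidence n h"
  have A: "A \<in> carrier_mat n n" by (simp add: A_def)
  have ds: "\<And>k. maximal_block D w (i k) (j k) \<and> i k > M \<and> j k + 1 - i k > M^2"
    using assms(5) by (simp add: delta_seq_def M_def Let_def)
  have ij: "\<And>k. i k \<le> j k" using ds by (simp add: maximal_block_def)
  have iM: "\<And>k. i k > M" using ds by simp
  have i1: "1 \<le> i k" for k using iM[of k] M1 by linarith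
  define sg where "sg = snd \<sigma>"
  define sw where "sw = fst \<sigma>"
  define rg where "rg = snd \<rho>"
  define rw where "rw = fst \<rho>"
  have cL: "\<And>k a. int (count_list (W (i (Suc k))) a) = int (count_list (W (blk_start h w (i k))) a) - sg * int (count_list sw a)"
  proof -
    fix k a
    have ls: "lstretch h w i k = \<sigma>" using assms(6) by simp
    show "int (count_list (W (i (Suc k))) a) = int (count_list (W (blk_start h w (i k))) a) - sg * int (count_list sw a)"
    proof (cases "i (Suc k) < blk_start h w (i k)")
      case True
      hence "\<sigma> = (map w [i (Suc k)..<blk_start h w (i k)], 1)" using ls by (simp add: lstretch_def Let_def)
      moreover have "W (blk_start h w (i k)) = W (i (Suc k)) @ map w [i (Suc k)..<blk_start h w (i k)]"
        using True W_split[of "i (Suc k)" "blk_start h w (i k)" w] by (simp add: W_def)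
      ultimately show ?thesis by (simp add: sg_def sw_def)
    next
      case False
      show ?thesis
      proof (cases "blk_start h w (i k) < i (Suc k)")
        case True
        hence "\<sigma> = (map w [blk_start h w (i k)..<i (Suc k)], -1)" using ls False by (simp add: lstretch_def Let_def)
        moreover have "W (i (Suc k)) = W (blk_start h w (i k)) @ map w [blk_start h w (i k)..<i (Suc k)]"
          using True W_split[of "blk_start h w (i k)" "i (Suc k)" w] by (simp add: W_def)
        ultimately show ?thesis by (simp add: sg_def sw_def)
      next
        case False2: False
        hence "\<sigma> = ([], 0)" using ls False by (simp add: lstretch_def Let_def)
        moreover have "i (Suc k) = blk_start h w (i k)" using False False2 by simp
        ultimately show ?thesis by (simp add: sg_def sw_def)
      qed
    qed
  qed
  have bs1: "Suc x \<le> blk_start h w (Suc x)" for x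
  proof -
    have "length (W (Suc x)) \<le> length (morph h (W (Suc x)))" by (rule len_morph_ge[OF set_W])
    thus ?thesis using len_morph_W[of "Suc x"] by simp
  qed
  have cR: "\<And>k a. int (count_list (W (Suc (j (Suc k)))) a) = int (count_list (W (blk_start h w (Suc (j k)))) a) + rg * int (count_list rw a)"
  proof -
    fix k a
    have rs: "rstretch h w j k = \<rho>" using assms(7) by simp
    define nn where "nn = blk_start h w (Suc (j k)) - 1"
    have nn: "Suc nn = blk_start h w (Suc (j k))" using bs1[of "j k"] by (simp add: nn_def)
    show "int (count_list (W (Suc (j (Suc k)))) a) = int (count_list (W (blk_start h w (Suc (j k)))) a) + rg * int (count_list rw a)"
    proof (cases "nn < j (Suc k)")
      case True
      hence "\<rho> = (map w [Suc nn..<Suc (j (Suc k))], 1)" using rs by (simp add: rstretch_def Let_def nn_def)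
      moreover have "W (Suc (j (Suc k))) = W (Suc nn) @ map w [Suc nn..<Suc (j (Suc k))]"
        using True W_split[of "Suc nn" "Suc (j (Suc k))" w] by (simp add: W_def)
      ultimately show ?thesis by (simp add: rg_def rw_def nn)
    next
      case False
      show ?thesis
      proof (cases "j (Suc k) < nn")
        case True
        hence "\<rho> = (map w [Suc (j (Suc k))..<Suc nn], -1)" using rs False by (simp add: rstretch_def Let_def nn_def)
        moreover have "W (Suc nn) = W (Suc (j (Suc k))) @ map w [Suc (j (Suc k))..<Suc nn]"
          using True W_split[of "Suc (j (Suc k))" "Suc nn" w] by (simp add: W_def)
        ultimately show ?thesis by (simp add: rg_def rw_def nn[symmetric])
      next
        case False2: False
        hence "\<rho> = ([], 0)" using rs False by (simp add: rstretch_def Let_def nn_def)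
        moreover have "j (Suc k) = nn" using False False2 by simp
        ultimately show ?thesis by (simp add: rg_def rw_def nn)
      qed
    qed
  qed
  define P where "P k = parikh n (W (i k))" for k
  define Du where "Du k = parikh n (map w [i k..<Suc (j k)])" for k
  define X where "X = (- sg) \<cdot>\<^sub>v parikh n sw"
  define Y where "Y = rg \<cdot>\<^sub>v parikh n rw + sg \<cdot>\<^sub>v parikh n sw"
  have X: "X \<in> carrier_vec n" by (simp add: X_def)
  have Y: "Y \<in> carrier_vec n" by (simp add: Y_def)
  have PS: "P (Suc k) = A *\<^sub>v P k + X" for k
  proof -
    have "A *\<^sub>v P k = parikh n (W (blk_start h w (i k)))"
      by (simp add: A_def P_def incidence_parikh[OF set_W] fixpt)
    note eqA = this
    show ?thesis
    proof (rule eq_vecI)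
      show "dim_vec (P (Suc k)) = dim_vec (A *\<^sub>v P k + X)" using X by (simp add: P_def)
      fix a assume "a < dim_vec (A *\<^sub>v P k + X)"
      hence a: "a < n" using X by simp
      have "(A *\<^sub>v P k + X) $ a = (A *\<^sub>v P k) $ a + X $ a" using a X by (simp add: A_def)
      also have "\<dots> = int (count_list (W (blk_start h w (i k))) a) - sg * int (count_list sw a)"
        using a unfolding eqA X_def by simp
      also have "\<dots> = P (Suc k) $ a" using a by (simp add: P_def cL)
      finally show "P (Suc k) $ a = (A *\<^sub>v P k + X) $ a" by simp
    qed
  qed
  have cU: "\<And>k a. int (count_list (map w [i k..<Suc (j k)]) a) = int (count_list (W (Suc (j k))) a) - int (count_list (W (i k)) a)"
  proof -
    fix k a
    have "W (Suc (j k)) = W (i k) @ map w [i k..<Suc (j k)]"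
      using ij[of k] W_split[of "i k" "Suc (j k)" w] by (simp add: W_def)
    thus "int (count_list (map w [i k..<Suc (j k)]) a) = int (count_list (W (Suc (j k))) a) - int (count_list (W (i k)) a)"
      by simp
  qed
  have cM: "\<And>k a. int (count_list (morph h (map w [i k..<Suc (j k)])) a) = int (count_list (W (blk_start h w (Suc (j k)))) a) - int (count_list (W (blk_start h w (i k))) a)"
  proof -
    fix k a
    have "W (Suc (j k)) = W (i k) @ map w [i k..<Suc (j k)]"
      using ij[of k] W_split[of "i k" "Suc (j k)" w] by (simp add: W_def)
    hence "morph h (W (Suc (j k))) = morph h (W (i k)) @ morph h (map w [i k..<Suc (j k)])" by simp
    thus "int (count_list (morph h (map w [i k..<Suc (j k)])) a) = int (count_list (W (blk_start h w (Suc (j k)))) a) - int (count_list (W (blk_start h w (i k))) a)"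
      by (simp add: fixpt)
  qed
  have DS: "Du (Suc k) = A *\<^sub>v Du k + Y" for k
  proof -
    have "A *\<^sub>v Du k = parikh n (morph h (map w [i k..<Suc (j k)]))"
      by (simp add: A_def Du_def incidence_parikh[OF set_mapw])
    note eqA = this
    show ?thesis
    proof (rule eq_vecI)
      show "dim_vec (Du (Suc k)) = dim_vec (A *\<^sub>v Du k + Y)" using Y by (simp add: Du_def)
      fix a assume "a < dim_vec (A *\<^sub>v Du k + Y)"
      hence a: "a < n" using Y by simp
      have "(A *\<^sub>v Du k + Y) $ a = (A *\<^sub>v Du k) $ a + Y $ a" using a Y by (simp add: A_def)
      also have "\<dots> = int (count_list (morph h (map w [i k..<Suc (j k)])) a) + rg * int (count_list rw a) + sg * int (count_list sw a)"
        using a unfolding eqA Y_def by simp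
      also have "\<dots> = Du (Suc k) $ a" using a unfolding Du_def parikh_index[OF a] cU cM cR cL by simp
      finally show "Du (Suc k) $ a = (A *\<^sub>v Du k + Y) $ a" by simp
    qed
  qed
  have Pk: "P k = (A ^\<^sub>m k) *\<^sub>v P 0 + pow_sum n A k *\<^sub>v X" for k
    by (rule closed_form[where P=P and V="P 0", OF A _ X refl PS]) (simp add: P_def)
  have Dk: "Du k = (A ^\<^sub>m k) *\<^sub>v Du 0 + pow_sum n A k *\<^sub>v Y" for k
    by (rule closed_form[where P=Du and V="Du 0", OF A _ Y refl DS]) (simp add: Du_def)
  define e where "e = w (Suc (j 0))"
  have eD: "e \<notin> D" using ds[of 0] by (simp add: maximal_block_def e_def)
  have "length (T 1) \<le> Suc (j 0)"
  proof -
    have "length (T 1) = length (h (w 0))" by (simp add: T_def morph_def)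
    also have "\<dots> \<le> M" by (rule h_le_M[OF w0n])
    finally show ?thesis using iM[of 0] ij[of 0] by simp
  qed
  hence eZ: "e \<in> Z1" unfolding e_def by (rule letters_after)
  have rat: "real (j k) / real (i k) < real (M^2)" for k
  proof -
    have blk: "\<forall>p. i k \<le> p \<and> p \<le> j k \<longrightarrow> w p \<in> D" using ds[of k] by (simp add: maximal_block_def)
    have "j k < M^2 * i k" by (rule ratio[OF eZ eD i1 blk])
    hence "real (j k) < real (M^2) * real (i k)" by (metis of_nat_less_iff of_nat_mult)
    moreover have "real (i k) > 0" using i1[of k] by simp
    ultimately show ?thesis by (simp add: divide_less_eq)
  qed
  show ?thesis
  proof (intro exI conjI allI impI)
    show "Du 0 \<in> carrier_vec n" "P 0 \<in> carrier_vec n" "X \<in> carrier_vec n" "Y \<in> carrier_vec n"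
      using X Y by (auto simp: Du_def P_def)
  next
    fix a assume "a < n" thus "0 \<le> Du 0 $ a" by (simp add: Du_def)
  next
    fix a assume "a < n" thus "0 \<le> P 0 $ a" by (simp add: P_def)
  next
    show "Du 0 \<noteq> 0\<^sub>v n"
    proof
      assume eq: "Du 0 = 0\<^sub>v n"
      have "w (i 0) \<in> set (map w [i 0..<Suc (j 0)])" using ij[of 0] by (auto simp del: upt_Suc)
      hence "count_list (map w [i 0..<Suc (j 0)]) (w (i 0)) \<noteq> 0" by (simp add: count_list_0_iff)
      moreover have "Du 0 $ w (i 0) = 0" using eq w_lt[of "i 0"] by simp
      ultimately show False using w_lt[of "i 0"] by (simp add: Du_def)
    qed
  next
    show "P 0 \<noteq> 0\<^sub>v n"
    proof
      assume eq: "P 0 = 0\<^sub>v n"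
      have "w 0 \<in> set (W (i 0))" using i1[of 0] by (auto simp: W_def)
      hence "count_list (W (i 0)) (w 0) \<noteq> 0" by (simp add: count_list_0_iff)
      moreover have "P 0 $ w 0 = 0" using eq w0n by simp
      ultimately show False using w0n by (simp add: P_def)
    qed
  next
    fix k
    have "ones_mult n (P k) = int (i k)" unfolding P_def by (simp add: ones_parikh[OF set_W])
    thus "int (i k) = ones_mult n ((incidence n h ^\<^sub>m k) *\<^sub>v P 0 + pow_sum n (incidence n h) k *\<^sub>v X)"
      using Pk[of k] by (simp add: A_def)
    have "ones_mult n (Du k) = int (Suc (j k) - i k)" unfolding Du_def by (simp only: ones_parikh[OF set_mapw] length_map length_upt)
    thus "int (j k) = int (i k) + ones_mult n ((incidence n h ^\<^sub>m k) *\<^sub>v Du 0 + pow_sum n (incidence n h) k *\<^sub>v Y) - 1"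
      using Dk[of k] ij[of k] by (simp add: A_def)
    show "real (j k) / real (i k) < real (M^2)" by (rule rat)
  qed
qed

end
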